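(* Let $C$ be a finite, balanced configuration of height $h$ and type $(n_0,\ldots,n_h)$ (with $n_0=n_h=1$). Then $$F_{h,1}=-F_{0,1}=-F_C,\qquad (p_{h,1}-p_{0,1})F_C=\sum_{k=1}^h\frac{1}{n_k}.$$ In particular, the residual force $F_C$ never vanishes.
   Context: Let $h$ be a positive integer and $(n_0,\ldots,n_h)$ positive integers with $n_0=n_h=1$. A finite configuration of type $(n_0,\ldots,n_h)$ is a collection of complex numbers $(p_{k,i})_{0\le k\le h,1\le i\le n_k}$ such that, for each $k$, the points $p_{k,i}$ and $p_{k\pm1,j}$ are pairwise distinct. Set $c_k=1/n_k$ and use the convention $n_{-1}=n_{h+1}=0$ (empty sums). The forces are $$F_{k,i}=2\sum_{j\neq i}\frac{c_k^2}{p_{k,i}-p_{k,j}}-\sum_{j=1}^{n_{k+1}}\frac{c_kc_{k+1}}{p_{k,i}-p_{k+1,j}}-\sum_{j=1}^{n_{k-1}}\frac{c_kc_{k-1}}{p_{k,i}-p_{k-1,j}}$$ for $0\le k\le h$, $1\le i\le n_k$. The configuration is balanced if $F_{k,i}=0$ for $1\le k\le h-1$ and all $i$ (no condition on $F_{0,1}$, $F_{h,1}$). The residual force is $F_C=F_{0,1}$. *)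

theory Defs
  imports Complex_Main
begin

text \<open>A finite configuration of height h and type (n_0,...,n_h): the points are
  p k i for 0 <= k <= h and 1 <= i <= n k. Levels outside 0..h have no points
  (convention n_{-1} = n_{h+1} = 0).\<close>

definition level_size :: "nat \<Rightarrow> (nat \<Rightarrow> nat) \<Rightarrow> nat \<Rightarrow> nat" where
  "level_size h n k = (if k \<le> h then n k else 0)"

definition is_type :: "nat \<Rightarrow> (nat \<Rightarrow> nat) \<Rightarrow> bool" where
  "is_type h n \<longleftrightarrow> h \<ge> 1 \<and> (\<forall>k\<le>h. n k \<ge> 1) \<and> n 0 = 1 \<and> n h = 1"

definition finite_configuration ::
    "nat \<Rightarrow> (nat \<Rightarrow> nat) \<Rightarrow> (nat \<Rightarrow> nat \<Rightarrow> complex) \<Rightarrow> bool" where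
  "finite_configuration h n p \<longleftrightarrow> is_type h n \<and>
     (\<forall>k\<le>h. \<forall>i\<in>{1..n k}. \<forall>j\<in>{1..n k}. i \<noteq> j \<longrightarrow> p k i \<noteq> p k j) \<and>
     (\<forall>k<h. \<forall>i\<in>{1..n k}. \<forall>j\<in>{1..n (Suc k)}. p k i \<noteq> p (Suc k) j)"

definition cc :: "(nat \<Rightarrow> nat) \<Rightarrow> nat \<Rightarrow> complex" where
  "cc n k = 1 / of_nat (n k)"

definition force ::
    "nat \<Rightarrow> (nat \<Rightarrow> nat) \<Rightarrow> (nat \<Rightarrow> nat \<Rightarrow> complex) \<Rightarrow> nat \<Rightarrow> nat \<Rightarrow> complex" where
  "force h n p k i =
     2 * (\<Sum>j\<in>{1..n k} - {i}. (cc n k)^2 / (p k i - p k j))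
     - (\<Sum>j\<in>{1..level_size h n (Suc k)}. cc n k * cc n (Suc k) / (p k i - p (Suc k) j))
     - (if k = 0 then 0 else
         (\<Sum>j\<in>{1..level_size h n (k - 1)}. cc n k * cc n (k - 1) / (p k i - p (k - 1) j)))"

definition balanced ::
    "nat \<Rightarrow> (nat \<Rightarrow> nat) \<Rightarrow> (nat \<Rightarrow> nat \<Rightarrow> complex) \<Rightarrow> bool" where
  "balanced h n p \<longleftrightarrow> (\<forall>k. 1 \<le> k \<and> k \<le> h - 1 \<longrightarrow> (\<forall>i\<in>{1..n k}. force h n p k i = 0))"

definition residual_force ::
    "nat \<Rightarrow> (nat \<Rightarrow> nat) \<Rightarrow> (nat \<Rightarrow> nat \<Rightarrow> complex) \<Rightarrow> complex" where
  "residual_force h n p = force h n p 0 1"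

end

theory Submission imports Defs begin

lemma sum_offdiag_swap:
  fixes f :: "nat \<Rightarrow> nat \<Rightarrow> 'a::comm_monoid_add"
  assumes "finite I"
  shows "(\<Sum>i\<in>I. \<Sum>j\<in>I-{i}. f i j) = (\<Sum>i\<in>I. \<Sum>j\<in>I-{i}. f j i)"
proof -
  have e: "(\<Sum>j\<in>I-{i}. g j) = (\<Sum>j\<in>I. if j = i then 0 else g j)" for g :: "nat \<Rightarrow> 'a" and i
  proof -
    have "(\<Sum>j\<in>I. if j = i then 0 else g j) = (\<Sum>j\<in>I-{i}. if j = i then 0 else g j)"
      by (rule sum.mono_neutral_right) (use assms in auto)
    also have "\<dots> = (\<Sum>j\<in>I-{i}. g j)" by (rule sum.cong) auto
    finally show ?thesis by simp
  qed
  have "(\<Sum>i\<in>I. \<Sum>j\<in>I-{i}. f i j) = (\<Sum>i\<in>I. \<Sum>j\<in>I. if j = i then 0 else f i j)"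
    by (simp only: e)
  also have "\<dots> = (\<Sum>j\<in>I. \<Sum>i\<in>I. if j = i then 0 else f i j)"
    by (rule sum.swap)
  also have "\<dots> = (\<Sum>i\<in>I. \<Sum>j\<in>I. if j = i then 0 else f j i)"
    by (intro sum.cong refl) auto
  also have "\<dots> = (\<Sum>i\<in>I. \<Sum>j\<in>I-{i}. f j i)"
    by (simp only: e)
  finally show ?thesis .
qed

lemma offdiag_const:
  fixes f :: "nat \<Rightarrow> nat \<Rightarrow> complex"
  assumes "finite I" "\<And>i j. i\<in>I \<Longrightarrow> j\<in>I \<Longrightarrow> i\<noteq>j \<Longrightarrow> f i j + f j i = s"
  shows "2 * (\<Sum>i\<in>I. \<Sum>j\<in>I-{i}. f i j) = s * of_nat (card I) * (of_nat (card I) - 1)"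
proof -
  have "2 * (\<Sum>i\<in>I. \<Sum>j\<in>I-{i}. f i j) = (\<Sum>i\<in>I. \<Sum>j\<in>I-{i}. f i j) + (\<Sum>i\<in>I. \<Sum>j\<in>I-{i}. f j i)"
    unfolding sum_offdiag_swap[OF assms(1), of f, symmetric] by (rule mult_2)
  also have "\<dots> = (\<Sum>i\<in>I. \<Sum>j\<in>I-{i}. f i j + f j i)" by (simp only: sum.distrib)
  also have "\<dots> = (\<Sum>i\<in>I. \<Sum>j\<in>I-{i}. s)"
    by (intro sum.cong refl) (use assms(2) in auto)
  also have "\<dots> = (\<Sum>i\<in>I. s * (of_nat (card I) - 1))"
  proof (rule sum.cong[OF refl])
    fix i assume i: "i \<in> I"
    then have c: "card I > 0" using assms(1) card_gt_0_iff by blast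
    have d: "card (I-{i}) = card I - 1" using i assms(1) by (simp add: card_Diff_singleton)
    have e: "(of_nat (card I - 1) :: complex) = of_nat (card I) - 1" using c by (simp add: of_nat_diff)
    show "(\<Sum>j\<in>I-{i}. s) = s * (of_nat (card I) - 1)"
      unfolding sum_constant d e by (rule mult.commute)
  qed
  also have "\<dots> = s * of_nat (card I) * (of_nat (card I) - 1)"
    unfolding sum_constant by (simp only: mult_ac)
  finally show ?thesis .
qed

lemma total_identity:
  fixes w :: "nat \<Rightarrow> nat \<Rightarrow> complex"
  shows "(\<Sum>k=0..h. \<Sum>i=1..n k. w k i * force h n p k i) =
    (\<Sum>k=0..h. 2 * (\<Sum>i=1..n k. \<Sum>j\<in>{1..n k}-{i}. w k i * (cc n k)^2 / (p k i - p k j)))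
    - (\<Sum>k<h. \<Sum>i=1..n k. \<Sum>j=1..n (Suc k). cc n k * cc n (Suc k) * (w k i - w (Suc k) j) / (p k i - p (Suc k) j))"
proof -
  define A where "A k = (\<Sum>i=1..n k. \<Sum>j\<in>{1..n k}-{i}. w k i * (cc n k)^2 / (p k i - p k j))" for k
  define B where "B k = (\<Sum>i=1..n k. \<Sum>j\<in>{1..level_size h n (Suc k)}. w k i * (cc n k * cc n (Suc k) / (p k i - p (Suc k) j)))" for k
  define C where "C k = (\<Sum>i=1..n k. (if k = 0 then 0 else
         (\<Sum>j\<in>{1..level_size h n (k - 1)}. w k i * (cc n k * cc n (k - 1) / (p k i - p (k - 1) j)))))" for k
  have pt: "(\<Sum>i=1..n k. w k i * force h n p k i) = 2 * A k - B k - C k" for k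
    unfolding A_def B_def C_def force_def
    by (cases "k = 0") (simp_all add: sum_distrib_left right_diff_distrib sum_subtractf mult_ac)
  have Bs: "(\<Sum>k=0..h. B k) = (\<Sum>k<h. \<Sum>i=1..n k. \<Sum>j=1..n (Suc k). w k i * (cc n k * cc n (Suc k) / (p k i - p (Suc k) j)))"
  proof -
    have "(\<Sum>k=0..h. B k) = (\<Sum>k<Suc h. B k)" by (simp add: atLeast0AtMost lessThan_Suc_atMost)
    also have "\<dots> = (\<Sum>k<h. B k)" by (simp add: B_def level_size_def)
    also have "\<dots> = (\<Sum>k<h. \<Sum>i=1..n k. \<Sum>j=1..n (Suc k). w k i * (cc n k * cc n (Suc k) / (p k i - p (Suc k) j)))"
      by (intro sum.cong refl) (simp add: B_def level_size_def)
    finally show ?thesis .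
  qed
  have Cs: "(\<Sum>k=0..h. C k) = (\<Sum>k<h. \<Sum>i=1..n k. \<Sum>j=1..n (Suc k). w (Suc k) j * (cc n (Suc k) * cc n k / (p (Suc k) j - p k i)))"
  proof -
    have "(\<Sum>k=0..h. C k) = (\<Sum>k<Suc h. C k)" by (simp add: atLeast0AtMost lessThan_Suc_atMost)
    also have "\<dots> = (\<Sum>k<h. C (Suc k))" by (subst sum.lessThan_Suc_shift) (simp add: C_def)
    also have "\<dots> = (\<Sum>k<h. \<Sum>j=1..n (Suc k). \<Sum>i=1..n k. w (Suc k) j * (cc n (Suc k) * cc n k / (p (Suc k) j - p k i)))"
      by (intro sum.cong refl) (simp add: C_def level_size_def)
    also have "\<dots> = (\<Sum>k<h. \<Sum>i=1..n k. \<Sum>j=1..n (Suc k). w (Suc k) j * (cc n (Suc k) * cc n k / (p (Suc k) j - p k i)))"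
      by (rule sum.cong[OF refl], rule sum.swap)
    finally show ?thesis .
  qed
  have comb: "w k i * (cc n k * cc n (Suc k) / (p k i - q)) + w (Suc k) j * (cc n (Suc k) * cc n k / (q - p k i))
     = cc n k * cc n (Suc k) * (w k i - w (Suc k) j) / (p k i - q)" for k i j q
  proof -
    have m: "\<And>x. x / (q - p k i) = - (x / (p k i - q))" by (metis divide_minus_right minus_diff_eq)
    show ?thesis unfolding m by (simp add: algebra_simps diff_divide_distrib)
  qed
  have "(\<Sum>k=0..h. \<Sum>i=1..n k. w k i * force h n p k i) = (\<Sum>k=0..h. 2 * A k - B k - C k)"
    by (rule sum.cong[OF refl], rule pt)
  also have "\<dots> = (\<Sum>k=0..h. 2 * A k) - ((\<Sum>k=0..h. B k) + (\<Sum>k=0..h. C k))"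
    by (simp add: sum_subtractf)
  also have "(\<Sum>k=0..h. B k) + (\<Sum>k=0..h. C k) = (\<Sum>k<h. \<Sum>i=1..n k. \<Sum>j=1..n (Suc k). cc n k * cc n (Suc k) * (w k i - w (Suc k) j) / (p k i - p (Suc k) j))"
    unfolding Bs Cs
    apply (subst sum.distrib[symmetric])
    apply (rule sum.cong[OF refl])
    apply (subst sum.distrib[symmetric])
    apply (rule sum.cong[OF refl])
    apply (subst sum.distrib[symmetric])
    apply (rule sum.cong[OF refl])
    apply (rule comb)
    done
  finally show ?thesis unfolding A_def .
qed


lemma neg_div_swap: "(x::complex) / (b - a) = - (x / (a - b))"
  by (metis divide_minus_right minus_diff_eq)

lemma level_one:
  fixes q :: "nat \<Rightarrow> complex"
  assumes "finite I"
  shows "(\<Sum>i\<in>I. \<Sum>j\<in>I-{i}. c / (q i - q j)) = 0"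
proof -
  have "2 * (\<Sum>i\<in>I. \<Sum>j\<in>I-{i}. c / (q i - q j)) = 0 * of_nat (card I) * (of_nat (card I) - 1)"
  proof (rule offdiag_const[OF assms])
    fix i j show "c / (q i - q j) + c / (q j - q i) = 0"
      by (subst neg_div_swap[of c "q j" "q i"]) simp
  qed
  then show ?thesis by simp
qed

lemma level_p:
  fixes q :: "nat \<Rightarrow> complex"
  assumes m: "m \<ge> 1" and d: "\<forall>i\<in>{1..m}. \<forall>j\<in>{1..m}. i \<noteq> j \<longrightarrow> q i \<noteq> q j"
  shows "2 * (\<Sum>i=1..m. \<Sum>j\<in>{1..m}-{i}. q i * (1 / of_nat m)^2 / (q i - q j)) = 1 - 1 / of_nat m"
proof -
  let ?c = "(1 / of_nat m :: complex)^2"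
  have "2 * (\<Sum>i=1..m. \<Sum>j\<in>{1..m}-{i}. q i * ?c / (q i - q j)) = ?c * of_nat (card {1..m}) * (of_nat (card {1..m}) - 1)"
  proof (rule offdiag_const)
    fix i j assume "i \<in> {1..m}" "j \<in> {1..m}" "i \<noteq> j"
    then have ne: "q i - q j \<noteq> 0" using d by auto
    have "q i * ?c / (q i - q j) + q j * ?c / (q j - q i) = (q i * ?c - q j * ?c) / (q i - q j)"
      unfolding neg_div_swap[of "q j * ?c" "q j" "q i"] by (simp add: diff_divide_distrib)
    also have "\<dots> = ?c * (q i - q j) / (q i - q j)" by (simp add: algebra_simps)
    also have "\<dots> = ?c" using ne by simp
    finally show "q i * ?c / (q i - q j) + q j * ?c / (q j - q i) = ?c" .
  qed simp
  also have "\<dots> = 1 - 1 / of_nat m" using m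
    by (simp add: field_simps power2_eq_square of_nat_diff)
  finally show ?thesis .
qed

lemma cross_p:
  fixes q r :: "nat \<Rightarrow> complex"
  assumes a: "a \<ge> 1" and b: "b \<ge> 1"
    and d: "\<forall>i\<in>{1..a}. \<forall>j\<in>{1..b}. q i \<noteq> r j"
  shows "(\<Sum>i=1..a. \<Sum>j=1..b. (1 / of_nat a) * (1 / of_nat b) * (q i - r j) / (q i - r j)) = 1"
proof -
  have "(\<Sum>i=1..a. \<Sum>j=1..b. (1 / of_nat a) * (1 / of_nat b) * (q i - r j) / (q i - r j))
      = (\<Sum>i=1..a. \<Sum>j=1..b. (1 / of_nat a) * (1 / of_nat b :: complex))"
    by (intro sum.cong refl) (use d in auto)
  also have "\<dots> = 1" using a b by simp
  finally show ?thesis .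
qed

theorem proposition3p1:
  fixes h :: nat and n :: "nat \<Rightarrow> nat" and p :: "nat \<Rightarrow> nat \<Rightarrow> complex"
  assumes "finite_configuration h n p"
    and "balanced h n p"
  shows "force h n p h 1 = - force h n p 0 1 \<and>
         force h n p 0 1 = residual_force h n p \<and>
         (p h 1 - p 0 1) * residual_force h n p = (\<Sum>k=1..h. 1 / of_nat (n k)) \<and>
         residual_force h n p \<noteq> 0"
proof -
  have h1: "h \<ge> 1" and nk: "\<And>k. k \<le> h \<Longrightarrow> n k \<ge> 1" and n0: "n 0 = 1" and nh: "n h = 1"
    using assms(1) unfolding finite_configuration_def is_type_def by auto
  have d1: "\<And>k. k \<le> h \<Longrightarrow> \<forall>i\<in>{1..n k}. \<forall>j\<in>{1..n k}. i \<noteq> j \<longrightarrow> p k i \<noteq> p k j"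
    using assms(1) unfolding finite_configuration_def by blast
  have d2: "\<And>k. k < h \<Longrightarrow> \<forall>i\<in>{1..n k}. \<forall>j\<in>{1..n (Suc k)}. p k i \<noteq> p (Suc k) j"
    using assms(1) unfolding finite_configuration_def by blast
  obtain h' where hh: "h = Suc h'" using h1 by (cases h) auto
  define F0 where "F0 = force h n p 0 1"
  define Fh where "Fh = force h n p h 1"
  have split: "(\<Sum>k=0..h. \<Sum>i=1..n k. w k i * force h n p k i) = w 0 1 * F0 + w h 1 * Fh" for w
  proof -
    define G where "G k = (\<Sum>i=1..n k. w k i * force h n p k i)" for k
    have "(\<Sum>k=0..h. G k) = (\<Sum>k<Suc h. G k)" by (simp add: atLeast0AtMost lessThan_Suc_atMost)
    also have "\<dots> = G 0 + (\<Sum>k<h. G (Suc k))" by (rule sum.lessThan_Suc_shift)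
    also have "\<dots> = G 0 + ((\<Sum>k<h'. G (Suc k)) + G h)" using hh by simp
    also have "(\<Sum>k<h'. G (Suc k)) = 0"
    proof (rule sum.neutral, rule ballI)
      fix k assume "k \<in> {..<h'}"
      then have "1 \<le> Suc k \<and> Suc k \<le> h - 1" using hh by auto
      then have "\<forall>i\<in>{1..n (Suc k)}. force h n p (Suc k) i = 0"
        using assms(2) unfolding balanced_def by blast
      then show "G (Suc k) = 0" unfolding G_def by simp
    qed
    finally show ?thesis unfolding G_def F0_def Fh_def by (simp add: n0 nh)
  qed
  have id1: "F0 + Fh = 0"
  proof -
    have "F0 + Fh = (\<Sum>k=0..h. \<Sum>i=1..n k. (\<lambda>_ _. 1) k i * force h n p k i)"
      using split[of "\<lambda>_ _. 1"] by simp
    also have "\<dots> = 0"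
      unfolding total_identity by (simp add: level_one)
    finally show ?thesis .
  qed
  have id2: "p 0 1 * F0 + p h 1 * Fh = (\<Sum>k=0..h. 1 - 1 / of_nat (n k)) - of_nat h"
  proof -
    have "p 0 1 * F0 + p h 1 * Fh = (\<Sum>k=0..h. \<Sum>i=1..n k. p k i * force h n p k i)"
      using split[of p] by simp
    also have "\<dots> = (\<Sum>k=0..h. 1 - 1 / of_nat (n k)) - (\<Sum>k<h. 1)"
      unfolding total_identity
    proof (intro arg_cong2[where f = minus] sum.cong refl)
      fix k assume "k \<in> {0..h}"
      then have k: "k \<le> h" by simp
      show "2 * (\<Sum>i=1..n k. \<Sum>j\<in>{1..n k}-{i}. p k i * (cc n k)\<^sup>2 / (p k i - p k j)) = 1 - 1 / of_nat (n k)"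
        unfolding cc_def by (rule level_p[OF nk[OF k] d1[OF k]])
    next
      fix k assume "k \<in> {..<h}"
      then have k: "k < h" by simp
      show "(\<Sum>i=1..n k. \<Sum>j=1..n (Suc k). cc n k * cc n (Suc k) * (p k i - p (Suc k) j) / (p k i - p (Suc k) j)) = 1"
        unfolding cc_def by (rule cross_p[OF nk nk d2[OF k]]) (use k in auto)
    qed
    finally show ?thesis by simp
  qed
  have sumsplit: "(\<Sum>k=0..h. 1 - 1 / of_nat (n k)) - of_nat h = - (\<Sum>k=1..h. 1 / of_nat (n k) :: complex)"
  proof -
    have "(\<Sum>k=0..h. 1 - 1 / of_nat (n k) :: complex) = of_nat (Suc h) - (\<Sum>k=0..h. 1 / of_nat (n k))"
      by (simp add: sum_subtractf)
    also have "(\<Sum>k=0..h. 1 / of_nat (n k) :: complex) = 1 + (\<Sum>k=1..h. 1 / of_nat (n k))"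
      by (simp add: sum.atLeast_Suc_atMost n0)
    finally show ?thesis by simp
  qed
  have main: "(p h 1 - p 0 1) * F0 = (\<Sum>k=1..h. 1 / of_nat (n k))"
  proof -
    have Fh: "Fh = - F0" using id1 by (simp add: eq_neg_iff_add_eq_0 add.commute)
    have "p 0 1 * F0 + p h 1 * Fh = - (\<Sum>k=1..h. 1 / of_nat (n k))" using id2 sumsplit by simp
    then show ?thesis unfolding Fh by (simp add: algebra_simps)
  qed
  have pos: "(\<Sum>k=1..h. 1 / of_nat (n k) :: complex) \<noteq> 0"
  proof -
    have "Re (\<Sum>k=1..h. 1 / of_nat (n k) :: complex) = (\<Sum>k=1..h. 1 / real (n k))"
      by (simp add: Re_sum)
    also have "\<dots> > 0"
      by (rule sum_pos) (use h1 nk in \<open>auto simp: Suc_le_eq\<close>)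
    finally have r: "0 < Re (\<Sum>k=1..h. 1 / of_nat (n k) :: complex)" .
    show ?thesis
    proof
      assume "(\<Sum>k=1..h. 1 / of_nat (n k) :: complex) = 0"
      then have "Re (\<Sum>k=1..h. 1 / of_nat (n k) :: complex) = 0" by (simp only: zero_complex.sel)
      with r show False by simp
    qed
  qed
  have "F0 \<noteq> 0" using main pos by auto
  then show ?thesis using main id1 unfolding residual_force_def F0_def Fh_def
    by (simp add: eq_neg_iff_add_eq_0 add.commute)
qed

end
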